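(* Let $R,S$ be finite nonempty sets, $k$ a positive integer, $p_r>0$ ($r\in R$), $T=\sum_{r\in R}p_r$, $d_{r,s}\ge0$, and $\kappa<0$. Let $F$ be the set of $(\mathbf x,\mathbf y)$ with $x_s,y_{r,s}\in\{0,1\}$, $\sum_{s\in S}x_s=k$, $y_{r,s}\le x_s$, and $\sum_{s\in S}y_{r,s}=1$ for all $r$. For $\mathbf y$ let $\overline{\mathcal K}(\mathbf y)=\sum_{r,s}p_ry_{r,s}e^{-\kappa d_{r,s}}$ and $\mathcal K(\mathbf y)=-\frac1\kappa\ln\left(\frac1T\overline{\mathcal K}(\mathbf y)\right)$. Let $U\subseteq S$, $c_s\ge0$ for $s\in U$, $\sigma(\mathbf x)=\sum_{s\in U}c_sx_s$, $\sigma^{max}=\max_{(\mathbf x,\mathbf y)\in F}\sigma(\mathbf x)$. Let $(\mathbf x^{all},\mathbf y^{all})$ be optimal for $\min\{\overline{\mathcal K}(\mathbf y):(\mathbf x,\mathbf y)\in F\}$, $\mathcal K^{all}=\mathcal K(\mathbf y^{all})$, $\sigma^{all}=\sigma(\mathbf x^{all})$. Set $\hat{\mathcal K}=\mathcal K^{all}$ and let $(\mathbf x^*,\mathbf y^*,v^*,q^* )$ be optimal for \[ \text{(KPL}^p)\quad \min\ \overline{\mathcal K}(\mathbf y)+Te^{-\kappa\hat{\mathcal K}}(v-1)\ \text{ s.t. } (\mathbf x,\mathbf y)\in F,\ v\ge e^{q},\ q=-\kappa\,\sigma(\mathbf x), \] with $\sigma^*=\sigma(\mathbf x^* )$, $q^*=-\kappa\sigma^*$,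 $\mathcal K^*=\mathcal K(\mathbf y^* )$. Let $w\in(0,1)$, $\beta_i=iw$ for $i=0,\dots,n$ with $nw>-\kappa\sigma^{max}$, and $g(q)=\max_{0\le i\le n}\left(e^{\beta_i}+e^{\beta_i}(q-\beta_i)\right)$ (the tangent-line approximation of $e^q$ in the linearized model (KPL$^t$)). Define $\ddot\sigma$ by \[ \mathcal K^*+\ddot\sigma=-\tfrac1\kappa\ln\left(\tfrac1T\left(\overline{\mathcal K}(\mathbf y^* )+Te^{-\kappa\hat{\mathcal K}}\left(g(q^* )-1\right)\right)\right), \] and let $A(w):=e^{\frac{we^w}{e^w-1}-1}-\frac{we^w}{e^w-1}$. Then the penalized locations are under-penalized and \[ 0\le\sigma^*-\ddot\sigma\le\sigma^{all}\left(1-e^{\kappa\sigma^*}\right)+\frac1\kappa\ln\left(1-A(w)\right). \] If, in addition, $c_s=c$ for all $s\in U$ and $w=-\kappa c$, then \[ 0\le\sigma^*-\ddot\sigma\le\sigma^{all}\left(1-e^{\kappa\sigma^*}\right). \]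
   Context: $U$ is a set of less desirable potential facility locations with distance penalties $c_s$; $\sigma^*$ is the intended penalty of the optimal solution of the penalized Kolm–Pollak model and $\ddot\sigma$ the penalty actually applied to the optimal Kolm–Pollak score by the linearized penalized model, which uses the approximation $\hat{\mathcal K}=\mathcal K^{all}$ of the optimal unpenalized score. *)

theory Defs
  imports Complex_Main
begin

text \<open>Decision variables are
real-valued functions; entries are restricted to {0,1} on S (resp. R x S) and fixed to 0
outside, so that F is a finite set of pairs of functions.\<close>
definition feasF :: "'r set \<Rightarrow> 's set \<Rightarrow> nat \<Rightarrow> (('s \<Rightarrow> real) \<times> ('r \<Rightarrow> 's \<Rightarrow> real)) set" where
  "feasF R S k = {(x, y).
      (\<forall>s\<in>S. x s \<in> {0, 1}) \<and> (\<forall>s. s \<notin> S \<longrightarrow> x s = 0) \<and>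
      (\<forall>r\<in>R. \<forall>s\<in>S. y r s \<in> {0, 1}) \<and> (\<forall>r s. (r \<notin> R \<or> s \<notin> S) \<longrightarrow> y r s = 0) \<and>
      (\<Sum>s\<in>S. x s) = real k \<and>
      (\<forall>r\<in>R. \<forall>s\<in>S. y r s \<le> x s) \<and>
      (\<forall>r\<in>R. (\<Sum>s\<in>S. y r s) = 1)}"

definition Kbar :: "'r set \<Rightarrow> 's set \<Rightarrow> ('r \<Rightarrow> real) \<Rightarrow> ('r \<Rightarrow> 's \<Rightarrow> real) \<Rightarrow> real
    \<Rightarrow> ('r \<Rightarrow> 's \<Rightarrow> real) \<Rightarrow> real" where
  "Kbar R S p d \<kappa> y = (\<Sum>r\<in>R. \<Sum>s\<in>S. p r * y r s * exp (- \<kappa> * d r s))"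

definition KP :: "'r set \<Rightarrow> 's set \<Rightarrow> ('r \<Rightarrow> real) \<Rightarrow> ('r \<Rightarrow> 's \<Rightarrow> real) \<Rightarrow> real
    \<Rightarrow> ('r \<Rightarrow> 's \<Rightarrow> real) \<Rightarrow> real" where
  "KP R S p d \<kappa> y = - (1 / \<kappa>) * ln ((1 / (\<Sum>r\<in>R. p r)) * Kbar R S p d \<kappa> y)"

definition pen :: "'s set \<Rightarrow> ('s \<Rightarrow> real) \<Rightarrow> ('s \<Rightarrow> real) \<Rightarrow> real" where
  "pen U c x = (\<Sum>s\<in>U. c s * x s)"

definition gtan :: "nat \<Rightarrow> real \<Rightarrow> real \<Rightarrow> real" where
  "gtan n w q = Max ((\<lambda>i. exp (real i * w) + exp (real i * w) * (q - real i * w)) ` {0..n})"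

definition Afun :: "real \<Rightarrow> real" where
  "Afun w = exp (w * exp w / (exp w - 1) - 1) - w * exp w / (exp w - 1)"

end

theory Submission imports Defs "HOL-Library.FuncSet" begin

lemma tangent_le: "exp b + exp b * (q - b) \<le> exp (q::real)"
proof -
  have "exp b * (1 + (q - b)) \<le> exp b * exp (q - b)"
    by (rule mult_left_mono) auto
  thus ?thesis by (simp add: algebra_simps exp_diff)
qed

lemma g_le: "gtan n w q \<le> exp q"
  unfolding gtan_def by (rule Max.boundedI) (auto intro: tangent_le)

lemma g_ge_i: "i \<le> n \<Longrightarrow> exp (real i * w) + exp (real i * w) * (q - real i * w) \<le> gtan n w q"
  unfolding gtan_def by (rule Max_ge) auto

lemma g_ge1: "0 \<le> q \<Longrightarrow> 1 \<le> gtan n w q"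
  using g_ge_i[of 0 n w q] by simp

lemma A_props:
  assumes "0 < w" "w < (1::real)"
  shows "0 \<le> Afun w \<and> Afun w < 1"
proof -
  define t where "t = w * exp w / (exp w - 1) - 1"
  have e1: "exp w - 1 > 0" using assms by simp
  have A: "Afun w = exp t - 1 - t" unfolding Afun_def t_def by simp
  have t0: "0 \<le> t"
  proof -
    have "exp (-w) \<ge> 1 - w" using exp_ge_add_one_self[of "-w"] by simp
    hence "exp w * exp (-w) \<ge> exp w * (1 - w)" by (intro mult_left_mono) auto
    hence "1 \<ge> exp w * (1 - w)" by (simp add: exp_minus)
    hence "w * exp w \<ge> exp w - 1" by (simp add: algebra_simps)
    thus ?thesis unfolding t_def using e1 by (simp add: field_simps)
  qed
  have tw: "t \<le> w"
  proof -
    have "1 + w \<le> exp w" by simp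
    hence "w * exp w \<le> (w + 1) * (exp w - 1)" by (simp add: algebra_simps)
    thus ?thesis unfolding t_def using e1 by (simp add: field_simps)
  qed
  have "exp t \<le> 1 + t + t^2" using exp_bound[of t] t0 tw assms by simp
  moreover have "t^2 < 1" using t0 tw assms by (simp add: abs_square_less_1)
  moreover have "1 + t \<le> exp t" by simp
  ultimately show ?thesis using A by linarith
qed

lemma seg:
  assumes "0 < w" "w < (1::real)" "0 \<le> s" "s \<le> w"
  shows "exp s - Afun w \<le> max (1 + s) (exp w * (1 + s - w))"
proof -
  define t where "t = w * exp w / (exp w - 1) - 1"
  have e1: "exp w - 1 > 0" using assms by simp
  have A: "Afun w = exp t - 1 - t" unfolding Afun_def t_def by simp
  have t0: "0 \<le> t"
  proof -
    have "exp (-w) \<ge> 1 - w" using exp_ge_add_one_self[of "-w"] by simp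
    hence "exp w * exp (-w) \<ge> exp w * (1 - w)" by (intro mult_left_mono) auto
    hence "1 \<ge> exp w * (1 - w)" by (simp add: exp_minus)
    hence "w * exp w \<ge> exp w - 1" by (simp add: algebra_simps)
    thus ?thesis unfolding t_def using e1 by (simp add: field_simps)
  qed
  have tw: "t \<le> w"
  proof -
    have "1 + w \<le> exp w" by simp
    hence "w * exp w \<le> (w + 1) * (exp w - 1)" by (simp add: algebra_simps)
    thus ?thesis unfolding t_def using e1 by (simp add: field_simps)
  qed
  have inter: "exp w * (1 + t - w) = 1 + t"
    unfolding t_def using e1 by (simp add: field_simps)
  show ?thesis
  proof (cases "s \<le> t")
    case True
    have "exp t = exp s * exp (t - s)" by (simp add: exp_diff)
    also have "\<dots> \<ge> exp s * (1 + (t - s))" by (intro mult_left_mono) auto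
    finally have "exp t \<ge> exp s * (1 + (t - s))" .
    moreover have "exp s * (t - s) \<ge> 1 * (t - s)"
      using True assms by (intro mult_right_mono) auto
    ultimately have "exp s - 1 - s \<le> exp t - 1 - t" by (simp add: algebra_simps)
    thus ?thesis using A by simp
  next
    case False
    have "exp t = exp s * exp (t - s)" by (simp add: exp_diff)
    also have "\<dots> \<ge> exp s * (1 + (t - s))" by (intro mult_left_mono) auto
    finally have h1: "exp s - exp t \<le> exp s * (s - t)" by (simp add: algebra_simps)
    have "exp s * (s - t) \<le> exp w * (s - t)" using False assms by (intro mult_right_mono) auto
    with h1 have "exp s - exp t \<le> exp w * (s - t)" by simp
    hence "exp s - Afun w \<le> exp w * (1 + t - w) + exp w * (s - t)" using A inter by simp
    also have "\<dots> = exp w * (1 + s - w)" by (simp add: algebra_simps)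
    finally show ?thesis by simp
  qed
qed

lemma g_lower:
  assumes "0 < w" "w < (1::real)" "0 \<le> q" "q < real n * w"
  shows "(1 - Afun w) * exp q \<le> gtan n w q"
proof -
  define i where "i = nat (floor (q / w))"
  have qw: "0 \<le> q / w" using assms by simp
  have ib: "real i \<le> q / w" "q / w < real i + 1" unfolding i_def using qw
    by (simp_all add: of_nat_nat)
  have "q / w < real n" using assms by (simp add: field_simps)
  hence "real i < real n" using ib by linarith
  hence iSn: "Suc i \<le> n" by simp
  define b where "b = real i * w"
  define s where "s = q - b"
  have s0: "0 \<le> s" unfolding s_def b_def using ib assms by (simp add: field_simps)
  have sw: "s \<le> w" unfolding s_def b_def using ib assms by (simp add: field_simps)
  have bq: "b \<le> q" using s0 s_def by simp
  have Ap: "0 \<le> Afun w" using A_props assms by simp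
  have eqq: "exp q - Afun w * exp b = exp b * (exp s - Afun w)"
    by (simp add: s_def exp_diff algebra_simps)
  have t1: "exp b * (1 + s) \<le> gtan n w q"
    using g_ge_i[of i n w q] iSn unfolding b_def s_def by (simp add: algebra_simps)
  have t2: "exp b * (exp w * (1 + s - w)) \<le> gtan n w q"
  proof -
    have "exp b * (exp w * (1 + s - w)) = exp (real (Suc i) * w) + exp (real (Suc i) * w) * (q - real (Suc i) * w)"
      unfolding s_def b_def by (simp add: algebra_simps flip: exp_add)
    thus ?thesis using g_ge_i[OF iSn, of w q] by simp
  qed
  have "exp q - Afun w * exp b \<le> gtan n w q"
  proof (cases "exp s - Afun w \<le> 1 + s")
    case True
    hence "exp b * (exp s - Afun w) \<le> exp b * (1 + s)" by (intro mult_left_mono) auto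
    thus ?thesis using eqq t1 by linarith
  next
    case False
    hence "exp s - Afun w \<le> exp w * (1 + s - w)" using seg[OF assms(1,2) s0 sw] by simp
    hence "exp b * (exp s - Afun w) \<le> exp b * (exp w * (1 + s - w))" by (intro mult_left_mono) auto
    thus ?thesis using eqq t2 by linarith
  qed
  moreover have "Afun w * exp b \<le> Afun w * exp q" using Ap bq by (intro mult_left_mono) auto
  ultimately show ?thesis by (simp add: algebra_simps)
qed

lemma main_ineq:
  assumes "0 \<le> x" "x \<le> (y::real)"
  shows "x - y + y * exp (-x) \<le> y - ln (exp y - exp x + 1)"
proof -
  define z where "z = (exp x - 1) * exp (-y)"
  have z0: "0 \<le> z" unfolding z_def using assms by simp
  have "exp x * exp (-y) \<le> 1" using assms by (simp flip: exp_add)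
  moreover have "z = exp x * exp (-y) - exp (-y)" unfolding z_def by (simp add: algebra_simps)
  moreover have "0 < exp (-y)" by simp
  ultimately have z1: "z < 1" by linarith
  have eq: "exp y - exp x + 1 = exp y * (1 - z)"
    unfolding z_def by (simp add: algebra_simps flip: exp_add)
  have "ln (exp y - exp x + 1) = y + ln (1 - z)" using z1 by (simp add: eq ln_mult)
  moreover have "ln (1 - z) \<le> - z" using ln_le_minus_one[of "1 - z"] z1 by simp
  ultimately have L: "z \<le> y - ln (exp y - exp x + 1)" by simp
  define dd where "dd = y - x"
  have d0: "0 \<le> dd" using assms dd_def by simp
  have ex: "1 - exp (-x) \<ge> 0" using assms by simp
  have zz: "z = (1 - exp (-x)) * exp (-dd)"
    unfolding z_def dd_def by (simp add: algebra_simps flip: exp_add)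
  have "z \<ge> (1 - exp (-x)) * (1 - dd)"
    unfolding zz using ex exp_ge_add_one_self[of "-dd"] by (intro mult_left_mono) auto
  moreover have "exp (-x) * (1 + x) \<le> 1"
  proof -
    have "exp (-x) * (1 + x) \<le> exp (-x) * exp x" by (intro mult_left_mono) auto
    thus ?thesis by (simp flip: exp_add)
  qed
  ultimately have "x - y + y * exp (-x) \<le> z"
    unfolding dd_def by (simp add: algebra_simps)
  with L show ?thesis by simp
qed


lemma key:
  fixes a B q qa g L :: real
  assumes a0: "0 < a" and B0: "0 < B" and Ba: "B \<le> a" and q0: "0 \<le> q" and qa0: "0 \<le> qa"
    and opt: "a + B * (exp q - 1) \<le> B * exp qa"
    and g1: "1 \<le> g" and gq: "g \<le> exp q" and Lg: "L * exp q \<le> g" and L0: "0 < L" and L1: "L \<le> 1"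
  shows "0 \<le> q - ln (1 + B / a * (g - 1)) \<and> q - ln (1 + B / a * (g - 1)) \<le> qa * (1 - exp (-q)) - ln L"
proof -
  define \<rho> where "\<rho> = B / a"
  have r0: "0 < \<rho>" and r1: "\<rho> \<le> 1" using a0 B0 Ba by (simp_all add: \<rho>_def)
  define X where "X = 1 + \<rho> * (g - 1)"
  have X1: "1 \<le> X" unfolding X_def using r0 g1 by simp
  have "\<rho> * (g - 1) \<le> 1 * (g - 1)" using r1 g1 by (intro mult_right_mono) auto
  hence "X \<le> exp q" unfolding X_def using gq by simp
  hence lnX: "ln X \<le> q" using X1 by (metis exp_le_cancel_iff exp_ln less_le_trans zero_less_one)
  define D where "D = exp qa - exp q + 1"
  have aBD: "a \<le> B * D" unfolding D_def using opt by (simp add: algebra_simps)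
  have "B * 1 \<le> B * D" using aBD Ba by simp
  hence D1: "1 \<le> D" using B0 by simp
  hence "exp q \<le> exp qa" unfolding D_def by simp
  hence qqa: "q \<le> qa" by simp
  have rD: "1 / D \<le> \<rho>" unfolding \<rho>_def using aBD D1 a0 B0 by (simp add: field_simps)
  have eq1: "exp q - 1 \<ge> 0" using q0 by simp
  have "X \<ge> 1 + \<rho> * (L * exp q - 1)" unfolding X_def using Lg r0 by (simp add: mult_left_mono)
  moreover have "1 + \<rho> * (L * exp q - 1) - L * (1 + \<rho> * (exp q - 1)) = (1 - L) * (1 - \<rho>)"
    by (simp add: algebra_simps)
  moreover have "(1 - L) * (1 - \<rho>) \<ge> 0" using L1 r1 by simp
  ultimately have X2: "X \<ge> L * (1 + \<rho> * (exp q - 1))" by linarith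
  have "1 / D * (exp q - 1) \<le> \<rho> * (exp q - 1)" using rD eq1 by (intro mult_right_mono) auto
  hence "L * (1 + 1 / D * (exp q - 1)) \<le> L * (1 + \<rho> * (exp q - 1))" using L0 by (intro mult_left_mono) auto
  moreover have "1 + 1 / D * (exp q - 1) = exp qa / D"
  proof -
    have "1 + 1 / D * (exp q - 1) = (D + exp q - 1) / D" using D1 by (simp add: field_simps)
    also have "D + exp q - 1 = exp qa" unfolding D_def by simp
    finally show ?thesis .
  qed
  ultimately have X3: "L * (exp qa / D) \<le> X" using X2 by simp
  have pos: "0 < L * (exp qa / D)" using L0 D1 by simp
  have "ln (L * (exp qa / D)) \<le> ln X" using X3 pos by simp
  moreover have "ln (L * (exp qa / D)) = ln L + qa - ln D" using L0 D1 by (simp add: ln_mult ln_div)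
  moreover have "q - qa + qa * exp (-q) \<le> qa - ln D" unfolding D_def using main_ineq[OF q0 qqa] by simp
  ultimately have "q - ln X \<le> qa * (1 - exp (-q)) - ln L" by (simp add: algebra_simps)
  thus ?thesis using lnX unfolding X_def \<rho>_def by simp
qed


lemma feasF_finite:
  fixes R :: "'r set" and S :: "'s set"
  assumes "finite R" "finite S"
  shows "finite (feasF R S k)"
proof -
  define X where "X = {x::'s\<Rightarrow>real. (\<forall>s\<in>S. x s \<in> {0,1}) \<and> (\<forall>s. s \<notin> S \<longrightarrow> x s = 0)}"
  define Y where "Y = {y::'r\<Rightarrow>'s\<Rightarrow>real. (\<forall>r\<in>R. \<forall>s\<in>S. y r s \<in> {0,1}) \<and> (\<forall>r s. (r \<notin> R \<or> s \<notin> S) \<longrightarrow> y r s = 0)}"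
  have fX: "finite X"
  proof (rule inj_on_finite[where f = "\<lambda>x. restrict x S" and B = "PiE S (\<lambda>_. {0,1::real})"])
    show "inj_on (\<lambda>x. restrict x S) X"
    proof (rule inj_onI)
      fix x x' assume "x \<in> X" "x' \<in> X" and e: "restrict x S = restrict x' S"
      show "x = x'"
      proof
        fix s show "x s = x' s"
        proof (cases "s \<in> S")
          case True thus ?thesis using fun_cong[OF e, of s] by simp
        next
          case False thus ?thesis using \<open>x \<in> X\<close> \<open>x' \<in> X\<close> by (simp add: X_def)
        qed
      qed
    qed
    show "(\<lambda>x. restrict x S) ` X \<subseteq> PiE S (\<lambda>_. {0,1})" by (auto simp: X_def)
    show "finite (PiE S (\<lambda>_. {0,1::real}))" using assms by (intro finite_PiE) auto
  qed
  have fY: "finite Y"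
  proof (rule inj_on_finite[where f = "\<lambda>y. restrict (case_prod y) (R \<times> S)" and B = "PiE (R \<times> S) (\<lambda>_. {0,1::real})"])
    show "inj_on (\<lambda>y. restrict (case_prod y) (R \<times> S)) Y"
    proof (rule inj_onI)
      fix y y' assume "y \<in> Y" "y' \<in> Y" and e: "restrict (case_prod y) (R \<times> S) = restrict (case_prod y') (R \<times> S)"
      show "y = y'"
      proof (intro ext)
        fix r s show "y r s = y' r s"
        proof (cases "r \<in> R \<and> s \<in> S")
          case True thus ?thesis using fun_cong[OF e, of "(r, s)"] by simp
        next
          case False thus ?thesis using \<open>y \<in> Y\<close> \<open>y' \<in> Y\<close> by (auto simp: Y_def)
        qed
      qed
    qed
    show "(\<lambda>y. restrict (case_prod y) (R \<times> S)) ` Y \<subseteq> PiE (R \<times> S) (\<lambda>_. {0,1})"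
    proof (rule image_subsetI)
      fix y assume "y \<in> Y"
      hence yy: "\<forall>r\<in>R. \<forall>s\<in>S. y r s \<in> {0,1}" by (simp add: Y_def)
      show "restrict (case_prod y) (R \<times> S) \<in> PiE (R \<times> S) (\<lambda>_. {0,1})"
        by (subst restrict_PiE_iff) (use yy in auto)
    qed
    show "finite (PiE (R \<times> S) (\<lambda>_. {0,1::real}))" using assms by (intro finite_PiE) auto
  qed
  have "feasF R S k \<subseteq> X \<times> Y" unfolding feasF_def X_def Y_def by auto
  thus ?thesis using fX fY by (meson finite_SigmaI finite_subset)
qed

lemma Kbar_pos:
  assumes "finite R" "R \<noteq> {}" "finite S" "\<forall>r\<in>R. p r > 0" "(x, y) \<in> feasF R S k"
  shows "Kbar R S p d \<kappa> y > 0"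
  unfolding Kbar_def
proof (rule sum_pos[OF assms(1,2)])
  fix r assume r: "r \<in> R"
  have y01: "\<forall>s\<in>S. y r s \<in> {0,1}" and y1: "(\<Sum>s\<in>S. y r s) = 1"
    using assms(5) r unfolding feasF_def by auto
  obtain s where s: "s \<in> S" "y r s = 1"
  proof (rule ccontr)
    assume "\<not> thesis"
    with that have "\<forall>s\<in>S. y r s = 0" using y01 by auto
    hence "(\<Sum>s\<in>S. y r s) = 0" by simp
    with y1 show False by simp
  qed
  show "0 < (\<Sum>s\<in>S. p r * y r s * exp (- \<kappa> * d r s))"
  proof (rule sum_pos2[OF assms(3) s(1)])
    show "0 < p r * y r s * exp (- \<kappa> * d r s)" using s assms(4) r by simp
    fix s' assume "s' \<in> S"
    hence "y r s' \<ge> 0" using y01 by auto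
    thus "0 \<le> p r * y r s' * exp (- \<kappa> * d r s')" using assms(4) r
      by (intro mult_nonneg_nonneg) (auto simp: less_imp_le)
  qed
qed

lemma pen_nonneg:
  assumes "U \<subseteq> S" "\<forall>s\<in>U. c s \<ge> 0" "(x, y) \<in> feasF R S k"
  shows "pen U c x \<ge> 0"
  unfolding pen_def
proof (rule sum_nonneg)
  fix s assume "s \<in> U"
  hence sS: "s \<in> S" using assms(1) by auto
  have "x s \<in> {0,1}" using assms(3) sS unfolding feasF_def by auto
  hence "x s \<ge> 0" by auto
  moreover have "c s \<ge> 0" using assms(2) \<open>s \<in> U\<close> by auto
  ultimately show "0 \<le> c s * x s" by simp
qed

theorem corollary3:
  fixes R :: "'r set" and S :: "'s set" and k :: nat
    and p :: "'r \<Rightarrow> real" and d :: "'r \<Rightarrow> 's \<Rightarrow> real" and \<kappa> :: real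
    and U :: "'s set" and c :: "'s \<Rightarrow> real"
    and xa :: "'s \<Rightarrow> real" and ya :: "'r \<Rightarrow> 's \<Rightarrow> real"
    and xs :: "'s \<Rightarrow> real" and ys :: "'r \<Rightarrow> 's \<Rightarrow> real" and vs qs :: real
    and w :: real and n :: nat and \<sigma>dd :: real
  defines "T \<equiv> (\<Sum>r\<in>R. p r)"
    and "F \<equiv> feasF R S k"
    and "\<sigma>max \<equiv> Max ((\<lambda>(x, y). pen U c x) ` feasF R S k)"
    and "Khat \<equiv> KP R S p d \<kappa> ya"
    and "\<sigma>all \<equiv> pen U c xa"
    and "\<sigma>st \<equiv> pen U c xs"
  assumes R_fin: "finite R" and R_ne: "R \<noteq> {}"
    and S_fin: "finite S" and S_ne: "S \<noteq> {}"
    and k_pos: "k > 0"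
    and p_pos: "\<forall>r\<in>R. p r > 0"
    and d_nonneg: "\<forall>r\<in>R. \<forall>s\<in>S. d r s \<ge> 0"
    and kappa_neg: "\<kappa> < 0"
    and U_sub: "U \<subseteq> S"
    and c_nonneg: "\<forall>s\<in>U. c s \<ge> 0"
    and all_feas: "(xa, ya) \<in> F"
    and all_opt: "\<forall>(x, y)\<in>F. Kbar R S p d \<kappa> ya \<le> Kbar R S p d \<kappa> y"
    and st_feas: "(xs, ys) \<in> F" "vs \<ge> exp qs" "qs = - \<kappa> * pen U c xs"
    and st_opt: "\<forall>x y v q. (x, y) \<in> F \<and> v \<ge> exp q \<and> q = - \<kappa> * pen U c x \<longrightarrow>
        Kbar R S p d \<kappa> ys + T * exp (- \<kappa> * Khat) * (vs - 1)
          \<le> Kbar R S p d \<kappa> y + T * exp (- \<kappa> * Khat) * (v - 1)"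
    and w_range: "0 < w" "w < 1"
    and n_large: "real n * w > - \<kappa> * \<sigma>max"
    and \<sigma>dd_def: "KP R S p d \<kappa> ys + \<sigma>dd =
        - (1 / \<kappa>) * ln ((1 / T) * (Kbar R S p d \<kappa> ys
            + T * exp (- \<kappa> * Khat) * (gtan n w (- \<kappa> * \<sigma>st) - 1)))"
  shows "0 \<le> \<sigma>st - \<sigma>dd \<and>
         \<sigma>st - \<sigma>dd \<le> \<sigma>all * (1 - exp (\<kappa> * \<sigma>st)) + (1 / \<kappa>) * ln (1 - Afun w) \<and>
         (\<forall>cc. (\<forall>s\<in>U. c s = cc) \<and> w = - \<kappa> * cc \<longrightarrow>
            0 \<le> \<sigma>st - \<sigma>dd \<and> \<sigma>st - \<sigma>dd \<le> \<sigma>all * (1 - exp (\<kappa> * \<sigma>st)))"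
  proof -
  define K where "K = - \<kappa>"
  have K0: "0 < K" using kappa_neg K_def by simp
  define a where "a = Kbar R S p d \<kappa> ys"
  define B where "B = Kbar R S p d \<kappa> ya"
  have a0: "0 < a" unfolding a_def using Kbar_pos[OF R_fin R_ne S_fin p_pos] st_feas(1) F_def by blast
  have B0: "0 < B" unfolding B_def using Kbar_pos[OF R_fin R_ne S_fin p_pos] all_feas F_def by blast
  have Ba: "B \<le> a" unfolding a_def B_def using all_opt st_feas(1) by blast
  have T0: "0 < T" unfolding T_def using sum_pos[OF R_fin R_ne] p_pos by blast
  have sst0: "0 \<le> \<sigma>st" unfolding \<sigma>st_def using pen_nonneg[OF U_sub c_nonneg] st_feas(1) F_def by blast
  have sall0: "0 \<le> \<sigma>all" unfolding \<sigma>all_def using pen_nonneg[OF U_sub c_nonneg] all_feas F_def by blast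
  define q where "q = K * \<sigma>st"
  define qa where "qa = K * \<sigma>all"
  have q0: "0 \<le> q" unfolding q_def using K0 sst0 by simp
  have qa0: "0 \<le> qa" unfolding qa_def using K0 sall0 by simp
  have eK: "T * exp (- \<kappa> * Khat) = B"
  proof -
    have "- \<kappa> * Khat = ln (1 / T * B)" unfolding Khat_def KP_def B_def T_def using kappa_neg by simp
    hence "exp (- \<kappa> * Khat) = 1 / T * B" using T0 B0 by simp
    thus ?thesis using T0 by simp
  qed
  have "Kbar R S p d \<kappa> ys + T * exp (- \<kappa> * Khat) * (vs - 1)
          \<le> Kbar R S p d \<kappa> ya + T * exp (- \<kappa> * Khat) * (exp qa - 1)"
    using st_opt all_feas unfolding qa_def K_def \<sigma>all_def by auto
  hence "a + B * (vs - 1) \<le> B * exp qa" unfolding eK a_def B_def by (simp add: algebra_simps)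
  moreover have "B * (exp q - 1) \<le> B * (vs - 1)" using st_feas(2,3) B0
    unfolding q_def K_def \<sigma>st_def by simp
  ultimately have opt: "a + B * (exp q - 1) \<le> B * exp qa" by linarith
  have fin: "finite ((\<lambda>(x, y). pen U c x) ` feasF R S k)" using feasF_finite[OF R_fin S_fin] by simp
  have "\<sigma>st \<le> \<sigma>max" unfolding \<sigma>max_def \<sigma>st_def
    using Max_ge[OF fin, of "pen U c xs"] st_feas(1) F_def by force
  hence "q \<le> K * \<sigma>max" unfolding q_def using K0 by simp
  hence qn: "q < real n * w" using n_large K_def by simp
  define g where "g = gtan n w q"
  have g1: "1 \<le> g" unfolding g_def using g_ge1 q0 by blast
  have gq: "g \<le> exp q" unfolding g_def by (rule g_le)
  define Y where "Y = 1 + B / a * (g - 1)"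
  have Y1: "1 \<le> Y" unfolding Y_def using g1 a0 B0 by simp
  have sdd: "\<sigma>dd = ln Y / K"
  proof -
    have "1 / T * (a + B * (g - 1)) = (1 / T * a) * Y" unfolding Y_def using a0 T0 by (simp add: field_simps)
    hence "ln (1 / T * (a + B * (g - 1))) = ln ((1 / T * a) * Y)" by (simp only:)
    also have "\<dots> = ln (1 / T * a) + ln Y" using a0 T0 Y1 by (intro ln_mult_pos) auto
    finally have "ln (1 / T * (a + B * (g - 1))) = ln (1 / T * a) + ln Y" .
    moreover have "KP R S p d \<kappa> ys = ln (1 / T * a) / K" unfolding KP_def a_def T_def K_def by simp
    moreover have "\<sigma>dd = - (1 / \<kappa>) * ln (1 / T * (a + B * (g - 1))) - KP R S p d \<kappa> ys"
      using \<sigma>dd_def unfolding a_def g_def q_def K_def eK by (simp add: algebra_simps)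
    ultimately show ?thesis unfolding K_def using kappa_neg by (simp add: add_divide_distrib)
  qed
  have diff: "\<sigma>st - \<sigma>dd = (q - ln Y) / K" unfolding sdd q_def using K0 by (simp add: field_simps)
  have rhs: "\<And>L. \<sigma>all * (1 - exp (\<kappa> * \<sigma>st)) + (1 / \<kappa>) * ln L = (qa * (1 - exp (-q)) - ln L) / K"
    unfolding qa_def q_def K_def using kappa_neg by (simp add: field_simps)
  have gen: "\<And>L. 0 < L \<Longrightarrow> L \<le> 1 \<Longrightarrow> L * exp q \<le> g \<Longrightarrow>
      0 \<le> \<sigma>st - \<sigma>dd \<and> \<sigma>st - \<sigma>dd \<le> \<sigma>all * (1 - exp (\<kappa> * \<sigma>st)) + (1 / \<kappa>) * ln L"
  proof -
    fix L :: real assume L: "0 < L" "L \<le> 1" "L * exp q \<le> g"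
    have k: "0 \<le> q - ln Y \<and> q - ln Y \<le> qa * (1 - exp (-q)) - ln L"
      using key[OF a0 B0 Ba q0 qa0 opt g1 gq L(3) L(1) L(2)] unfolding Y_def .
    show "0 \<le> \<sigma>st - \<sigma>dd \<and> \<sigma>st - \<sigma>dd \<le> \<sigma>all * (1 - exp (\<kappa> * \<sigma>st)) + (1 / \<kappa>) * ln L"
      unfolding diff rhs using k K0 by (simp add: divide_right_mono)
  qed
  have Ap: "0 \<le> Afun w" "Afun w < 1" using A_props[OF w_range] by auto
  have part1: "0 \<le> \<sigma>st - \<sigma>dd \<and> \<sigma>st - \<sigma>dd \<le> \<sigma>all * (1 - exp (\<kappa> * \<sigma>st)) + (1 / \<kappa>) * ln (1 - Afun w)"
    using gen[of "1 - Afun w"] Ap g_lower[OF w_range q0 qn] unfolding g_def by simp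
  have part2: "0 \<le> \<sigma>st - \<sigma>dd \<and> \<sigma>st - \<sigma>dd \<le> \<sigma>all * (1 - exp (\<kappa> * \<sigma>st))"
    if cc: "\<forall>s\<in>U. c s = cc" "w = - \<kappa> * cc" for cc
  proof -
    have x01: "\<forall>s\<in>U. xs s \<in> {0,1}" using st_feas(1) U_sub unfolding F_def feasF_def by auto
    define m where "m = card {s\<in>U. xs s = 1}"
    have finU: "finite U" using U_sub S_fin finite_subset by blast
    have "(\<Sum>s\<in>U. xs s) = (\<Sum>s\<in>U. if xs s = 1 then 1 else 0)"
      using x01 by (intro sum.cong) auto
    also have "\<dots> = real m" unfolding m_def using finU by (simp add: sum.If_cases Int_def conj_commute)
    finally have sm: "(\<Sum>s\<in>U. xs s) = real m" .
    have "\<sigma>st = cc * real m" unfolding \<sigma>st_def pen_def using cc(1) sm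
      by (simp flip: sum_distrib_left)
    hence qm: "q = real m * w" unfolding q_def K_def cc(2) by simp
    hence "real m < real n" using qn w_range by simp
    hence "m \<le> n" by simp
    from g_ge_i[OF this, of w q] have "exp q \<le> g" unfolding g_def qm by simp
    thus ?thesis using gen[of 1] by simp
  qed
  show ?thesis using part1 part2 by blast
qed

end
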